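(* For any $(K,\Sigma)\in\Omega$, $$S_{K,\Sigma}=\mu\sum_{t=0}^\infty(\gamma V_K)^t+\frac{\mathrm{Tr}(\Sigma(B^\top B+D^\top D))}{1-V_K}\Big[\frac{1}{1-\gamma}-\frac{1}{1-\gamma V_K}\Big].$$ Furthermore, $$\frac{\mu}{1-\gamma V_K}\le S_{K,\Sigma}\le\frac{f(K,\Sigma)-(1-\gamma)^{-1}\big[\mathrm{Tr}(\Sigma R)-\frac{\tau}{2}\big(n+\log((2\pi)^n\det\Sigma)\big)\big]}{Q}.$$
   Context: Setting: $n\ge1$, $A,C\in\mathbb{R}$, $B\in\mathbb{R}^{1\times n}$ (row vector), $D\in\mathbb{R}^{n\times n}$, $Q>0$, $R\in\mathbb{R}^{n\times n}$ symmetric positive definite, $\gamma\in(0,1)$, $\tau>0$. Dynamics $x_{t+1}=(A+w_t^xC)x_t+(B+w_t^uD)u_t$ with $x_t\in\mathbb{R}$, $u_t\in\mathbb{R}^n$, white noises $w_t^x\in\mathbb{R}$, $w_t^u\in\mathbb{R}^{1\times n}$ independent across time, of each other and of the controls, zero mean, $\mathbb{E}(w_t^x)^2=1$, $\mathbb{E}[(w_t^u)^\top w_t^u]=I_n$. Policy $u_t\sim\mathcal N(-Kx_t,\Sigma)$ with density $\pi_{K,\Sigma}(\cdot|x)$. $V_K=A^2+C^2+K^\top(B^\top B+D^\top D)K-2ABK$, $\Omega=\{(K,\Sigma):K\in\mathbb{R}^n,\ \Sigma=\Sigma^\top\succ0,\ \gamma V_K<1\}$. $x_0\sim\mathcal D$,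 $\mu=\mathbb{E}x_0^2$. $S_{K,\Sigma}=\sum_{t\ge0}\gamma^t\mathbb{E}[x_t^2]$ and $f(K,\Sigma)=\mathbb{E}\big[\sum_{t\ge0}\gamma^t(Qx_t^2+u_t^\top Ru_t+\tau\log\pi_{K,\Sigma}(u_t|x_t))\big]$, both under the policy $(K,\Sigma)$. *)

theory Defs
  imports "HOL-Probability.Probability"
begin

definition outer :: "real^'n \<Rightarrow> real^'n^'n" where
  "outer b = (\<chi> i j. b $ i * b $ j)"

definition sym_pd :: "real^'n^'n \<Rightarrow> bool" where
  "sym_pd M \<longleftrightarrow> transpose M = M \<and> (\<forall>v. v \<noteq> 0 \<longrightarrow> v \<bullet> (M *v v) > 0)"

definition V_K :: "real \<Rightarrow> real^'n \<Rightarrow> real \<Rightarrow> real^'n^'n \<Rightarrow> real^'n \<Rightarrow> real" where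
  "V_K A B C D K = A^2 + C^2 + K \<bullet> ((outer B + transpose D ** D) *v K) - 2 * A * (B \<bullet> K)"

definition gauss_dens :: "real^'n^'n \<Rightarrow> real^'n \<Rightarrow> real^'n \<Rightarrow> real" where
  "gauss_dens Sig m v =
     exp (- (1/2) * ((v - m) \<bullet> (matrix_inv Sig *v (v - m))))
     / sqrt ((2 * pi) ^ CARD('n) * det Sig)"

definition policy_dens :: "real^'n \<Rightarrow> real^'n^'n \<Rightarrow> real \<Rightarrow> real^'n \<Rightarrow> real" where
  "policy_dens K Sig x u = gauss_dens Sig (- (x *\<^sub>R K)) u"

definition gen_events :: "'a measure \<Rightarrow> 'b measure \<Rightarrow> ('a \<Rightarrow> 'b) \<Rightarrow> 'a set set" where
  "gen_events M N X = {X -` A \<inter> space M | A. A \<in> sets N}"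

text \<open>Index of the primitive sources of randomness: initial state, state noise,
  control noise, and the exploration randomness of the Gaussian policy at each time.\<close>
datatype src = Src0 | SrcWX nat | SrcWU nat | SrcXi nat

end

theory Submission
  imports Defs
begin

lemma sym_pd_invertible:
  fixes Sig :: "real^'n^'n"
  assumes "sym_pd Sig" shows "invertible Sig"
proof -
  have "\<forall>x. Sig *v x = 0 \<longrightarrow> x = 0"
    using assms unfolding sym_pd_def by (metis inner_zero_right less_irrefl)
  then show ?thesis
    unfolding invertible_left_inverse matrix_left_invertible_ker by blast
qed

lemma matrix_inv_props:
  fixes Sig :: "real^'n^'n"
  assumes "invertible Sig"
  shows "matrix_inv Sig ** Sig = mat 1" "Sig ** matrix_inv Sig = mat 1"
  using someI_ex[OF assms[unfolded invertible_def]] unfolding matrix_inv_def by auto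

lemma sym_pd_inv_sym:
  fixes Sig :: "real^'n^'n"
  assumes "sym_pd Sig" shows "transpose (matrix_inv Sig) = matrix_inv Sig"
proof -
  let ?S = "matrix_inv Sig"
  have i: "invertible Sig" by (rule sym_pd_invertible[OF assms])
  have T: "transpose Sig = Sig" using assms sym_pd_def by blast
  have "transpose (Sig ** ?S) = mat 1" using matrix_inv_props[OF i] by (simp add: transpose_mat)
  then have "transpose ?S ** Sig = mat 1" by (simp add: matrix_transpose_mul T)
  then have "transpose ?S = (transpose ?S ** Sig) ** ?S"
    by (metis matrix_mul_assoc matrix_inv_props(2)[OF i] matrix_mul_rid)
  also have "\<dots> = ?S" using \<open>transpose ?S ** Sig = mat 1\<close> by (simp only: matrix_mul_lid)
  finally show ?thesis .
qed

lemma sym_pd_nonneg: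
  fixes Sig :: "real^'n^'n"
  assumes "sym_pd Sig" shows "0 \<le> v \<bullet> (Sig *v v)"
  using assms unfolding sym_pd_def by (cases "v = 0") (auto intro: less_imp_le)

lemma inner_transpose_sym:
  fixes S :: "real^'n^'n"
  assumes "transpose S = S"
  shows "a \<bullet> (S *v v) = v \<bullet> (S *v a)"
  by (metis assms dot_lmul_matrix inner_commute transpose_transpose vector_transpose_matrix)

lemma mvm_uminus: "(A::real^'n^'m) *v (- x) = - (A *v x)"
  by (simp add: vec_eq_iff matrix_vector_mult_def sum_negf)

context prob_space begin

lemma gauss_basic:
  fixes Sig :: "real^'n^'n" and X :: "'a \<Rightarrow> real^'n"
  assumes Sp: "sym_pd Sig" and dist: "distributed M lborel X (\<lambda>v. ennreal (gauss_dens Sig 0 v))"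
  shows "0 < sqrt ((2 * pi) ^ CARD('n) * det Sig)"
    and "(\<integral>\<^sup>+ v. ennreal (gauss_dens Sig 0 v) \<partial>lborel) = 1"
proof -
  have meas: "(\<lambda>v. ennreal (gauss_dens Sig 0 v)) \<in> borel_measurable lborel"
    using dist by (simp add: distributed_def)
  have "(\<integral>\<^sup>+ v. ennreal (gauss_dens Sig 0 v) * 1 \<partial>lborel) = (\<integral>\<^sup>+ \<omega>. 1 \<partial>M)"
    by (rule distributed_nn_integral[OF dist]) simp
  also have "\<dots> = 1" by (simp add: emeasure_space_1)
  finally show N: "(\<integral>\<^sup>+ v. ennreal (gauss_dens Sig 0 v) \<partial>lborel) = 1" by simp
  show "0 < sqrt ((2 * pi) ^ CARD('n) * det Sig)"
  proof (rule ccontr)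
    assume "\<not> ?thesis"
    then have "\<And>v. gauss_dens Sig 0 v \<le> 0"
      unfolding gauss_dens_def by (intro divide_nonneg_nonpos) auto
    then have "(\<lambda>v. ennreal (gauss_dens Sig 0 v)) = (\<lambda>_. 0)"
      by (auto intro!: ext ennreal_neg)
    then have "(\<integral>\<^sup>+ v. ennreal (gauss_dens Sig 0 v) \<partial>lborel) = 0"
      by simp
    with N show False by simp
  qed
qed

lemma gauss_mgf:
  fixes Sig :: "real^'n^'n" and X :: "'a \<Rightarrow> real^'n"
  assumes Sp: "sym_pd Sig" and dist: "distributed M lborel X (\<lambda>v. ennreal (gauss_dens Sig 0 v))"
  shows "(\<integral>\<^sup>+ \<omega>. ennreal (exp (b \<bullet> X \<omega>)) \<partial>M) = ennreal (exp ((b \<bullet> (Sig *v b)) / 2))"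
proof -
  let ?S = "matrix_inv Sig"
  let ?Z = "sqrt ((2 * pi) ^ CARD('n) * det Sig)"
  let ?g = "\<lambda>v. gauss_dens Sig 0 v"
  let ?q = "b \<bullet> (Sig *v b)"
  define a where "a = - (Sig *v b)"
  have i: "invertible Sig" by (rule sym_pd_invertible[OF Sp])
  have ST: "transpose ?S = ?S" by (rule sym_pd_inv_sym[OF Sp])
  have TS: "transpose Sig = Sig" using Sp sym_pd_def by blast
  have Zp: "0 < ?Z" by (rule gauss_basic(1)[OF Sp dist])
  have meas: "(\<lambda>v. ennreal (?g v)) \<in> borel_measurable lborel"
    using dist by (simp add: distributed_def)
  have Sa: "?S *v a = - b"
    unfolding a_def by (simp add: matrix_vector_mul_assoc matrix_inv_props[OF i] mvm_uminus)
  have aSv: "a \<bullet> (?S *v v) = v \<bullet> (?S *v a)" for v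
    by (rule inner_transpose_sym[OF ST])
  have aSa: "a \<bullet> (?S *v a) = ?q"
    unfolding Sa unfolding a_def by (simp add: inner_commute)
  have quad: "(a + v) \<bullet> (?S *v (a + v)) = v \<bullet> (?S *v v) - 2 * (b \<bullet> v) + ?q" for v
  proof -
    have "(a + v) \<bullet> (?S *v (a + v)) = a \<bullet> (?S *v a) + a \<bullet> (?S *v v) + v \<bullet> (?S *v a) + v \<bullet> (?S *v v)"
      by (simp add: matrix_vector_right_distrib inner_add_left inner_add_right)
    also have "\<dots> = v \<bullet> (?S *v v) - 2 * (b \<bullet> v) + ?q"
      unfolding aSv[of v] aSa unfolding Sa by (simp add: inner_commute[of b v])
    finally show ?thesis .
  qed
  have geq: "?g (a + v) = (?g v * exp (b \<bullet> v)) * exp (- ?q / 2)" for v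
  proof -
    have "?g (a + v) = exp (- (1/2) * (v \<bullet> (?S *v v)) + b \<bullet> v + (- ?q / 2)) / ?Z"
      unfolding gauss_dens_def diff_zero quad
      by (rule arg_cong[where f="\<lambda>x. exp x / ?Z"]) (simp add: algebra_simps)
    also have "\<dots> = (?g v * exp (b \<bullet> v)) * exp (- ?q / 2)"
      unfolding gauss_dens_def exp_add by simp
    finally show ?thesis .
  qed
  have "(\<integral>\<^sup>+ v. ennreal (?g v) \<partial>lborel) = (\<integral>\<^sup>+ v. ennreal (?g v) \<partial>distr lborel borel ((+) a))"
    by (simp add: lborel_distr_plus)
  also have "\<dots> = (\<integral>\<^sup>+ v. ennreal (?g (a + v)) \<partial>lborel)"
    by (rule nn_integral_distr) (use meas in auto)
  also have "\<dots> = (\<integral>\<^sup>+ v. ennreal (?g v * exp (b \<bullet> v)) * ennreal (exp (- ?q / 2)) \<partial>lborel)"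
    unfolding geq
    by (intro nn_integral_cong) (simp add: ennreal_mult'' ennreal_mult)
  also have "\<dots> = (\<integral>\<^sup>+ v. ennreal (?g v * exp (b \<bullet> v)) \<partial>lborel) * ennreal (exp (- ?q / 2))"
  proof (rule nn_integral_multc)
    have "(\<lambda>v. ennreal (?g v) * ennreal (exp (b \<bullet> v))) \<in> borel_measurable lborel"
      using meas by measurable
    then show "(\<lambda>v. ennreal (?g v * exp (b \<bullet> v))) \<in> borel_measurable lborel"
      by (simp add: ennreal_mult'')
  qed
  finally have E1: "(\<integral>\<^sup>+ v. ennreal (?g v * exp (b \<bullet> v)) \<partial>lborel) * ennreal (exp (- ?q / 2)) = 1"
    using gauss_basic(2)[OF Sp dist] by simp
  have "(\<integral>\<^sup>+ v. ennreal (?g v * exp (b \<bullet> v)) \<partial>lborel)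
      = (\<integral>\<^sup>+ v. ennreal (?g v * exp (b \<bullet> v)) \<partial>lborel) * (ennreal (exp (- ?q / 2)) * ennreal (exp (?q / 2)))"
    by (simp flip: ennreal_mult add: exp_add[symmetric])
  also have "\<dots> = ennreal (exp (?q / 2))"
    by (subst mult.assoc[symmetric], subst E1, simp)
  finally have E2: "(\<integral>\<^sup>+ v. ennreal (?g v * exp (b \<bullet> v)) \<partial>lborel) = ennreal (exp (?q / 2))" .
  have "(\<integral>\<^sup>+ v. ennreal (?g v) * ennreal (exp (b \<bullet> v)) \<partial>lborel) = (\<integral>\<^sup>+ \<omega>. ennreal (exp (b \<bullet> X \<omega>)) \<partial>M)"
    by (rule distributed_nn_integral[OF dist]) simp
  moreover have "(\<integral>\<^sup>+ v. ennreal (?g v) * ennreal (exp (b \<bullet> v)) \<partial>lborel) = (\<integral>\<^sup>+ v. ennreal (?g v * exp (b \<bullet> v)) \<partial>lborel)"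
    by (intro nn_integral_cong) (simp add: ennreal_mult'')
  ultimately show ?thesis using E2 by simp
qed

end

lemma eps_le0: fixes a K :: real
  assumes "\<And>s. 0 < s \<Longrightarrow> s \<le> 1 \<Longrightarrow> a \<le> s * K" shows "a \<le> 0"
proof (rule ccontr)
  assume "\<not> a \<le> 0" then have a: "a > 0" by simp
  have K: "a \<le> K" using assms[of 1] by simp
  then have Kp: "K > 0" using a by simp
  define s where "s = a / (2 * K)"
  have "0 < s" "s \<le> 1" using a K Kp by (auto simp: s_def field_simps)
  then have "a \<le> s * K" by (rule assms)
  also have "\<dots> = a / 2" using Kp by (simp add: s_def field_simps)
  finally show False using a by simp
qed

lemma exp_m1_le: "exp y - 1 \<le> y * exp (y::real)"
proof -
  have "1 + (- y) \<le> exp (- y)" by (rule exp_ge_add_one_self)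
  then have "(1 - y) * exp y \<le> exp (- y) * exp y" by (intro mult_right_mono) auto
  then show ?thesis by (simp add: exp_minus field_simps)
qed

lemma exp_taylor3_le: "exp (y::real) \<le> 1 + y + y^2/2 + \<bar>y\<bar>^3 * exp \<bar>y\<bar> / 6"
proof -
  obtain t where t: "\<bar>t\<bar> \<le> \<bar>y\<bar>" and e: "exp y = (\<Sum>m<3. y ^ m / fact m) + (exp t / fact 3) * y ^ 3"
    using Maclaurin_exp_le[of y 3] by blast
  have s: "(\<Sum>m<3. y ^ m / fact m) = 1 + y + y^2/2"
    by (simp add: numeral_3_eq_3 power2_eq_square)
  have "exp t * y ^ 3 \<le> \<bar>y\<bar> ^ 3 * exp \<bar>y\<bar>"
  proof -
    have "exp t * y ^ 3 \<le> exp t * \<bar>y\<bar> ^ 3"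
      by (intro mult_left_mono) (auto simp: power_abs[symmetric])
    also have "\<dots> \<le> exp \<bar>y\<bar> * \<bar>y\<bar> ^ 3" using t by (intro mult_right_mono) auto
    finally show ?thesis by (simp add: mult.commute)
  qed
  then show ?thesis unfolding e s by (simp add: fact_numeral)
qed

lemma exp_taylor4_ge: "1 + y + y^2/2 + y^3/6 \<le> exp (y::real)"
proof -
  obtain t where e: "exp y = (\<Sum>m<4. y ^ m / fact m) + (exp t / fact 4) * y ^ 4"
    using Maclaurin_exp_le[of y 4] by blast
  have s: "(\<Sum>m<4. y ^ m / fact m) = 1 + y + y^2/2 + y^3/6"
    by (simp add: eval_nat_numeral fact_numeral)
  have "0 \<le> (exp t / fact 4) * y ^ 4" by (simp add: zero_le_even_power)
  then show ?thesis unfolding e s by simp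
qed

lemma sq_le_cosh: "1 + y^2/2 \<le> (exp y + exp (- y)) / (2::real)"
  using exp_taylor4_ge[of y] exp_taylor4_ge[of "-y"] by (simp add: power2_eq_square power3_eq_cube)

context prob_space begin

lemma mgf_moments:
  fixes X :: "'a \<Rightarrow> real" and c :: real
  assumes Xm[measurable]: "X \<in> borel_measurable M" and c: "0 \<le> c"
    and mgf: "\<And>s. (\<integral>\<^sup>+\<omega>. ennreal (exp (s * X \<omega>)) \<partial>M) = ennreal (exp (s^2 * c / 2))"
  shows "integrable M X" "expectation X = 0" "integrable M (\<lambda>\<omega>. (X \<omega>)^2)"
        "expectation (\<lambda>\<omega>. (X \<omega>)^2) = c"
proof -
  have ie: "integrable M (\<lambda>\<omega>. exp (s * X \<omega>)) \<and> expectation (\<lambda>\<omega>. exp (s * X \<omega>)) = exp (s^2*c/2)" for s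
    by (rule nn_integral_eq_integrable[THEN iffD1, OF _ _ _ mgf[of s]]) auto
  have ie1: "integrable M (\<lambda>\<omega>. exp (s * X \<omega>))" for s using ie by blast
  have ie2: "expectation (\<lambda>\<omega>. exp (s * X \<omega>)) = exp (s^2*c/2)" for s using ie by blast
  have ch: "integrable M (\<lambda>\<omega>. exp (s * X \<omega>) + exp ((- s) * X \<omega>))" for s
    using ie1[of s] ie1[of "-s"] by simp
  have ea: "exp \<bar>x\<bar> \<le> exp (1 * x) + exp ((- 1) * x)" for x :: real
    by (cases "x \<ge> 0") (auto intro: add_increasing add_increasing2 less_imp_le)
  have ea2: "exp (2 * \<bar>x\<bar>) \<le> exp (2 * x) + exp ((- 2) * x)" for x :: real
    by (cases "x \<ge> 0") (auto intro: add_increasing add_increasing2 less_imp_le)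
  show iX: "integrable M X"
  proof (rule Bochner_Integration.integrable_bound[OF ch[of 1]])
    show "AE \<omega> in M. norm (X \<omega>) \<le> norm (exp (1 * X \<omega>) + exp ((- 1) * X \<omega>))"
    proof (intro AE_I2)
      fix \<omega>
      have "\<bar>X \<omega>\<bar> \<le> exp \<bar>X \<omega>\<bar>" using exp_ge_add_one_self[of "\<bar>X \<omega>\<bar>"] by linarith
      also have "\<dots> \<le> exp (1 * X \<omega>) + exp ((- 1) * X \<omega>)" using ea by simp
      finally show "norm (X \<omega>) \<le> norm (exp (1 * X \<omega>) + exp ((- 1) * X \<omega>))"
        by (simp add: add_pos_pos less_imp_le)
    qed
  qed simp
  show iX2: "integrable M (\<lambda>\<omega>. (X \<omega>)^2)"
  proof (rule Bochner_Integration.integrable_bound[OF integrable_mult_right[OF ch[of 1], of 2]])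
    show "AE \<omega> in M. norm ((X \<omega>)^2) \<le> norm (2 * (exp (1 * X \<omega>) + exp ((- 1) * X \<omega>)))"
    proof (intro AE_I2)
      fix \<omega>
      have "\<bar>X \<omega>\<bar>^2 / 2 \<le> exp \<bar>X \<omega>\<bar>" using exp_lower_Taylor_quadratic[of "\<bar>X \<omega>\<bar>"] by simp
      then have "(X \<omega>)^2 \<le> 2 * exp \<bar>X \<omega>\<bar>" by simp
      also have "\<dots> \<le> 2 * (exp (1 * X \<omega>) + exp ((- 1) * X \<omega>))" using ea[of "X \<omega>"] by simp
      finally show "norm ((X \<omega>)^2) \<le> norm (2 * (exp (1 * X \<omega>) + exp ((- 1) * X \<omega>)))"
        by (simp add: add_pos_pos less_imp_le)
    qed
  qed simp
  have iX3: "integrable M (\<lambda>\<omega>. \<bar>X \<omega>\<bar>^3 * exp \<bar>X \<omega>\<bar>)"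
  proof (rule Bochner_Integration.integrable_bound[OF integrable_mult_right[OF ch[of 2], of 6]])
    show "AE \<omega> in M. norm (\<bar>X \<omega>\<bar>^3 * exp \<bar>X \<omega>\<bar>) \<le> norm (6 * (exp (2 * X \<omega>) + exp ((- 2) * X \<omega>)))"
    proof (intro AE_I2)
      fix \<omega>
      have "\<bar>X \<omega>\<bar>^3 / 6 \<le> exp \<bar>X \<omega>\<bar>" using exp_taylor4_ge[of "\<bar>X \<omega>\<bar>"] abs_ge_zero[of "X \<omega>"] zero_le_power2[of "\<bar>X \<omega>\<bar>"] by linarith
      then have "\<bar>X \<omega>\<bar>^3 * exp \<bar>X \<omega>\<bar> \<le> (6 * exp \<bar>X \<omega>\<bar>) * exp \<bar>X \<omega>\<bar>"
        by (intro mult_right_mono) auto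
      also have "\<dots> = 6 * exp (2 * \<bar>X \<omega>\<bar>)" by (simp add: mult_exp_exp)
      also have "\<dots> \<le> 6 * (exp (2 * X \<omega>) + exp ((- 2) * X \<omega>))" using ea2[of "X \<omega>"] by simp
      finally show "norm (\<bar>X \<omega>\<bar>^3 * exp \<bar>X \<omega>\<bar>) \<le> norm (6 * (exp (2 * X \<omega>) + exp ((- 2) * X \<omega>)))"
        by (simp add: add_pos_pos less_imp_le)
    qed
  qed simp
  define K3 where "K3 = expectation (\<lambda>\<omega>. \<bar>X \<omega>\<bar>^3 * exp \<bar>X \<omega>\<bar>)"
  have expb: "exp (s^2*c/2) - 1 \<le> s^2 * (c/2 * exp (c/2))" if "\<bar>s\<bar> \<le> 1" for s
  proof -
    have s2: "s^2 \<le> 1" using that by (simp add: abs_square_le_1)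
    have "exp (s^2*c/2) - 1 \<le> (s^2*c/2) * exp (s^2*c/2)" by (rule exp_m1_le)
    also have "\<dots> \<le> (s^2*c/2) * exp (c/2)"
      using s2 c by (intro mult_left_mono) (auto simp: mult_left_le_one_le)
    finally show ?thesis by simp
  qed
  have m1: "s * expectation X \<le> s^2 * (c/2 * exp (c/2))" if "\<bar>s\<bar> \<le> 1" for s
  proof -
    have "1 + s * expectation X = expectation (\<lambda>\<omega>. 1 + s * X \<omega>)"
      using iX by (simp add: prob_space)
    also have "\<dots> \<le> expectation (\<lambda>\<omega>. exp (s * X \<omega>))"
      using iX ie1 by (intro integral_mono) (auto simp: exp_ge_add_one_self)
    also have "\<dots> = exp (s^2*c/2)" by (rule ie2)
    finally show ?thesis using expb[OF that] by simp
  qed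
  have "expectation X \<le> 0"
  proof (rule eps_le0[of _ "c/2 * exp (c/2)"])
    fix s :: real assume s: "0 < s" "s \<le> 1"
    then have "s * expectation X \<le> s * (s * (c/2 * exp (c/2)))"
      using m1[of s] by (simp add: power2_eq_square mult.assoc)
    then show "expectation X \<le> s * (c/2 * exp (c/2))" using s by (metis mult_le_cancel_left_pos)
  qed
  moreover have "- expectation X \<le> 0"
  proof (rule eps_le0[of _ "c/2 * exp (c/2)"])
    fix s :: real assume s: "0 < s" "s \<le> 1"
    then have "s * (- expectation X) \<le> s * (s * (c/2 * exp (c/2)))"
      using m1[of "-s"] by (simp add: power2_eq_square mult.assoc)
    then show "- expectation X \<le> s * (c/2 * exp (c/2))" using s by (metis mult_le_cancel_left_pos)
  qed
  ultimately show EX: "expectation X = 0" by simp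
  have up: "s^2 * expectation (\<lambda>\<omega>. (X \<omega>)^2) / 2 \<le> exp (s^2*c/2) - 1" for s
  proof -
    have "1 + s^2 * expectation (\<lambda>\<omega>. (X \<omega>)^2) / 2 = expectation (\<lambda>\<omega>. 1 + (s * X \<omega>)^2 / 2)"
      using iX2 by (simp add: prob_space power_mult_distrib)
    also have "\<dots> \<le> expectation (\<lambda>\<omega>. (exp (s * X \<omega>) + exp ((- s) * X \<omega>)) / 2)"
    proof (intro integral_mono)
      show "integrable M (\<lambda>\<omega>. 1 + (s * X \<omega>)^2 / 2)" using iX2 by (simp add: power_mult_distrib)
      show "integrable M (\<lambda>\<omega>. (exp (s * X \<omega>) + exp ((- s) * X \<omega>)) / 2)" using ch by simp
      fix \<omega> show "1 + (s * X \<omega>)^2 / 2 \<le> (exp (s * X \<omega>) + exp ((- s) * X \<omega>)) / 2"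
        using sq_le_cosh[of "s * X \<omega>"] by simp
    qed
    also have "\<dots> = exp (s^2*c/2)"
      using ie1[of s] ie1[of "-s"] ie2[of s] ie2[of "-s"] by simp
    finally show ?thesis by simp
  qed
  let ?E2 = "expectation (\<lambda>\<omega>. (X \<omega>)^2)"
  have "?E2 - c \<le> 0"
  proof (rule eps_le0[of _ "c * (c/2 * exp (c/2))"])
    fix s :: real assume s: "0 < s" "s \<le> 1"
    have "s^2 * ?E2 / 2 \<le> (s^2*c/2) * exp (s^2*c/2)"
      using up[of s] exp_m1_le[of "s^2*c/2"] by linarith
    then have "?E2 \<le> c * exp (s^2*c/2)" using s by (simp add: field_simps)
    also have "\<dots> = c + c * (exp (s^2*c/2) - 1)" by (simp add: algebra_simps)
    also have "\<dots> \<le> c + c * (s^2 * (c/2 * exp (c/2)))"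
      using expb[of s] s c by (intro add_left_mono mult_left_mono) auto
    also have "\<dots> \<le> c + c * (s * (c/2 * exp (c/2)))"
      using s c by (intro add_left_mono mult_left_mono mult_right_mono) (auto simp: power2_eq_square)
    finally show "?E2 - c \<le> s * (c * (c/2 * exp (c/2)))" by (simp add: algebra_simps)
  qed
  moreover have "c - ?E2 \<le> 0"
  proof (rule eps_le0[of _ "K3 / 3"])
    fix s :: real assume s: "0 < s" "s \<le> 1"
    have pt: "exp (s * X \<omega>) \<le> 1 + s * X \<omega> + s^2 * (X \<omega>)^2 / 2 + s^3 * (\<bar>X \<omega>\<bar>^3 * exp \<bar>X \<omega>\<bar>) / 6" for \<omega>
    proof -
      have "\<bar>s * X \<omega>\<bar>^3 * exp \<bar>s * X \<omega>\<bar> \<le> s^3 * (\<bar>X \<omega>\<bar>^3 * exp \<bar>X \<omega>\<bar>)"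
      proof -
        have "\<bar>s * X \<omega>\<bar> \<le> \<bar>X \<omega>\<bar>" using s by (simp add: abs_mult mult_left_le_one_le)
        then have "exp \<bar>s * X \<omega>\<bar> \<le> exp \<bar>X \<omega>\<bar>" by simp
        then show ?thesis using s by (simp add: abs_mult power_mult_distrib mult.assoc mult_left_mono)
      qed
      then show ?thesis using exp_taylor3_le[of "s * X \<omega>"] by (simp add: power_mult_distrib)
    qed
    have "1 + s^2 * c / 2 \<le> exp (s^2 * c / 2)" using exp_ge_add_one_self[of "s^2*c/2"] by simp
    also have "\<dots> = expectation (\<lambda>\<omega>. exp (s * X \<omega>))" by (simp add: ie2)
    also have "\<dots> \<le> expectation (\<lambda>\<omega>. 1 + s * X \<omega> + s^2 * (X \<omega>)^2 / 2 + s^3 * (\<bar>X \<omega>\<bar>^3 * exp \<bar>X \<omega>\<bar>) / 6)"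
      using ie1 iX iX2 iX3 pt by (intro integral_mono) auto
    also have "\<dots> = 1 + s * expectation X + s^2 * ?E2 / 2 + s^3 * K3 / 6"
      using iX iX2 iX3 by (simp add: prob_space K3_def)
    finally have "s^2 * c / 2 \<le> s^2 * ?E2 / 2 + s^3 * K3 / 6" using EX by simp
    then have "s^2 * (c - ?E2) \<le> s^2 * (s * (K3 / 3))" by (simp add: algebra_simps power3_eq_cube power2_eq_square)
    then show "c - ?E2 \<le> s * (K3 / 3)" using s by simp
  qed
  ultimately show "?E2 = c" by simp
qed

end

lemma axis_quad: "axis i (1::real) \<bullet> ((A::real^'n^'n) *v axis j 1) = A $ i $ j"
  by (simp add: inner_axis' matrix_vector_mul_component inner_axis)

lemma axis_inner: "axis i (1::real) \<bullet> x = x $ i"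
  by (simp add: inner_axis')

context prob_space begin

lemma gauss_moments:
  fixes Sig :: "real^'n^'n" and X :: "'a \<Rightarrow> real^'n"
  assumes Sp: "sym_pd Sig" and dist: "distributed M lborel X (\<lambda>v. ennreal (gauss_dens Sig 0 v))"
  shows "integrable M (\<lambda>\<omega>. X \<omega> $ i)" "expectation (\<lambda>\<omega>. X \<omega> $ i) = 0"
        "integrable M (\<lambda>\<omega>. X \<omega> $ i * X \<omega> $ j)"
        "expectation (\<lambda>\<omega>. X \<omega> $ i * X \<omega> $ j) = Sig $ i $ j"
proof -
  have Xm[measurable]: "X \<in> borel_measurable M"
    using distributed_measurable[OF dist] by simp
  have TS: "transpose Sig = Sig" using Sp sym_pd_def by blast
  then have Ssym: "Sig $ j $ i = Sig $ i $ j" for i j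
    by (metis transpose_def vec_lambda_beta)
  have mom: "integrable M (\<lambda>\<omega>. b \<bullet> X \<omega>) \<and> expectation (\<lambda>\<omega>. b \<bullet> X \<omega>) = 0 \<and>
      integrable M (\<lambda>\<omega>. (b \<bullet> X \<omega>)^2) \<and> expectation (\<lambda>\<omega>. (b \<bullet> X \<omega>)^2) = b \<bullet> (Sig *v b)" for b
  proof -
    have mgf: "(\<integral>\<^sup>+\<omega>. ennreal (exp (s * (b \<bullet> X \<omega>))) \<partial>M) = ennreal (exp (s^2 * (b \<bullet> (Sig *v b)) / 2))" for s
      using gauss_mgf[OF Sp dist, of "s *\<^sub>R b"]
      by (simp add: matrix_vector_mult_scaleR power2_eq_square mult.assoc)
    show ?thesis
      using mgf_moments[of "\<lambda>\<omega>. b \<bullet> X \<omega>" "b \<bullet> (Sig *v b)", OF _ sym_pd_nonneg[OF Sp] mgf]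
      by simp
  qed
  from mom[of "axis i 1"] show "integrable M (\<lambda>\<omega>. X \<omega> $ i)" "expectation (\<lambda>\<omega>. X \<omega> $ i) = 0"
    by (simp_all add: axis_inner)
  let ?b = "axis i (1::real) + axis j 1"
  have eq: "X \<omega> $ i * X \<omega> $ j = ((?b \<bullet> X \<omega>)^2 - (axis i 1 \<bullet> X \<omega>)^2 - (axis j 1 \<bullet> X \<omega>)^2) / 2" for \<omega>
    by (simp add: inner_add_left axis_inner power2_eq_square algebra_simps)
  have q: "?b \<bullet> (Sig *v ?b) = Sig $ i $ i + 2 * Sig $ i $ j + Sig $ j $ j"
    by (simp add: inner_add_left matrix_vector_right_distrib inner_add_right axis_quad Ssym[of i j])
  show "integrable M (\<lambda>\<omega>. X \<omega> $ i * X \<omega> $ j)"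
    unfolding eq using mom[of ?b] mom[of "axis i 1"] mom[of "axis j 1"] by simp
  show "expectation (\<lambda>\<omega>. X \<omega> $ i * X \<omega> $ j) = Sig $ i $ j"
    unfolding eq using mom[of ?b] mom[of "axis i 1"] mom[of "axis j 1"]
    by (simp add: q axis_quad)
qed

end

lemma gen_events_Int_stable: "Int_stable (gen_events M borel f)"
  for f :: "'w \<Rightarrow> 'b::topological_space"
  unfolding gen_events_def Int_stable_def
proof safe
  fix A B :: "'b set" assume "A \<in> sets borel" "B \<in> sets borel"
  then show "\<exists>C. (f -` A \<inter> space M) \<inter> (f -` B \<inter> space M) = f -` C \<inter> space M \<and> C \<in> sets borel"
    by (intro exI[of _ "A \<inter> B"]) auto
qed

locale lqr = prob_space M
  for M :: "'w measure"
    and A C Q gam tau :: real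
    and B :: "real^'n" and D R Sig :: "real^'n^'n" and K :: "real^'n"
    and x0 :: "'w \<Rightarrow> real"
    and wx :: "nat \<Rightarrow> 'w \<Rightarrow> real" and wu :: "nat \<Rightarrow> 'w \<Rightarrow> real^'n"
    and xi :: "nat \<Rightarrow> 'w \<Rightarrow> real^'n"
    and xs :: "nat \<Rightarrow> 'w \<Rightarrow> real" and us :: "nat \<Rightarrow> 'w \<Rightarrow> real^'n" +
  assumes Qpos: "Q > 0" and Rpd: "sym_pd R"
    and gam: "0 < gam" "gam < 1" and tau: "tau > 0"
    and Sigpd: "sym_pd Sig" and stab: "gam * V_K A B C D K < 1"
    and x0_rv: "x0 \<in> borel_measurable M"
    and x0_sq: "integrable M (\<lambda>\<omega>. (x0 \<omega>)^2)"
    and wx_rv: "\<And>t. wx t \<in> borel_measurable M"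
    and wu_rv: "\<And>t. wu t \<in> borel_measurable M"
    and wx_int: "\<And>t. integrable M (wx t)" "\<And>t. integrable M (\<lambda>\<omega>. (wx t \<omega>)^2)"
    and wx_mom: "\<And>t. expectation (wx t) = 0"
                "\<And>t. expectation (\<lambda>\<omega>. (wx t \<omega>)^2) = 1"
    and wu_int: "\<And>t i. integrable M (\<lambda>\<omega>. wu t \<omega> $ i)"
                "\<And>t i j. integrable M (\<lambda>\<omega>. wu t \<omega> $ i * wu t \<omega> $ j)"
    and wu_mom: "\<And>t i. expectation (\<lambda>\<omega>. wu t \<omega> $ i) = 0"
                "\<And>t i j. expectation (\<lambda>\<omega>. wu t \<omega> $ i * wu t \<omega> $ j)
                           = (if i = j then 1 else 0)"
    and xi_dist: "\<And>t. distributed M lborel (xi t) (\<lambda>v. ennreal (gauss_dens Sig 0 v))"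
    and indep: "indep_sets
                  (\<lambda>s. case s of Src0 \<Rightarrow> gen_events M borel x0
                              | SrcWX t \<Rightarrow> gen_events M borel (wx t)
                              | SrcWU t \<Rightarrow> gen_events M borel (wu t)
                              | SrcXi t \<Rightarrow> gen_events M borel (xi t)) UNIV"
    and u_def: "\<And>t \<omega>. us t \<omega> = - (xs t \<omega> *\<^sub>R K) + xi t \<omega>"
    and x_init: "\<And>\<omega>. xs 0 \<omega> = x0 \<omega>"
    and x_step: "\<And>t \<omega>. xs (Suc t) \<omega> =
                    (A + wx t \<omega> * C) * xs t \<omega> + (B + wu t \<omega> v* D) \<bullet> us t \<omega>"
begin

definition Ev :: "src \<Rightarrow> 'w set set" where
  "Ev s = (case s of Src0 \<Rightarrow> gen_events M borel x0
                              | SrcWX t \<Rightarrow> gen_events M borel (wx t)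
                              | SrcWU t \<Rightarrow> gen_events M borel (wu t)
                              | SrcXi t \<Rightarrow> gen_events M borel (xi t))"

definition FF :: "src set \<Rightarrow> 'w measure" where
  "FF J = sigma (space M) (\<Union>s\<in>J. Ev s)"

lemma xi_rv: "xi t \<in> borel_measurable M"
  using distributed_measurable[OF xi_dist[of t]] by simp

lemmas rvs[measurable] = x0_rv wx_rv wu_rv xi_rv

lemma gen_events_sub: "f \<in> borel_measurable M \<Longrightarrow> gen_events M borel f \<subseteq> sets M"
  unfolding gen_events_def by (auto intro: measurable_sets)

lemma Ev_sub: "Ev s \<subseteq> sets M"
  unfolding Ev_def by (cases s) (auto intro!: gen_events_sub)

lemma Ev_pow: "(\<Union>s\<in>J. Ev s) \<subseteq> Pow (space M)"
  using Ev_sub sets.sets_into_space by blast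

lemma space_FF[simp]: "space (FF J) = space M"
  unfolding FF_def using Ev_pow by (simp add: space_measure_of_conv)

lemma sets_FF: "sets (FF J) = sigma_sets (space M) (\<Union>s\<in>J. Ev s)"
  unfolding FF_def using Ev_pow by (simp add: sets_measure_of_conv)

lemma subalg_FF: "subalgebra M (FF J)"
  unfolding subalgebra_def sets_FF space_FF
  using Ev_sub by (auto intro!: sets.sigma_sets_subset)

lemma meas_FF_M: "f \<in> measurable (FF J) N \<Longrightarrow> f \<in> measurable M N"
  by (rule measurable_from_subalg[OF subalg_FF])

lemma gen_meas_FF:
  fixes f :: "'w \<Rightarrow> 'b::topological_space"
  assumes "s \<in> J" "Ev s = gen_events M borel f" "f \<in> borel_measurable M"
  shows "f \<in> borel_measurable (FF J)"
proof (rule measurableI)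
  fix x assume "x \<in> space (FF J)" then show "f x \<in> space borel" by simp
next
  fix A :: "'b set" assume "A \<in> sets borel"
  then have "f -` A \<inter> space M \<in> Ev s" unfolding assms(2) gen_events_def by blast
  then show "f -` A \<inter> space (FF J) \<in> sets (FF J)"
    unfolding sets_FF space_FF using assms(1) by blast
qed

lemma Int_stable_Ev: "Int_stable (Ev s)"
  unfolding Ev_def by (cases s) (auto intro: gen_events_Int_stable)

lemma indep_FF:
  fixes X Y :: "'w \<Rightarrow> real"
  assumes J: "J1 \<inter> J2 = {}" and X: "X \<in> borel_measurable (FF J1)" and Y: "Y \<in> borel_measurable (FF J2)"
  shows "indep_var borel X borel Y"
proof -
  have ind: "indep_sets Ev (\<Union>b\<in>UNIV. case_bool J1 J2 b)"
    using indep unfolding Ev_def[abs_def] by (rule indep_sets_mono_index[rotated]) simp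
  have "indep_sets (\<lambda>b. sigma_sets (space M) (\<Union>s\<in>case_bool J1 J2 b. Ev s)) UNIV"
    by (rule indep_sets_collect_sigma[OF ind Int_stable_Ev])
       (use J in \<open>auto simp: disjoint_family_on_def split: bool.splits\<close>)
  then have ind2: "indep_sets (\<lambda>b. sets (FF (case_bool J1 J2 b))) UNIV"
    unfolding sets_FF .
  show ?thesis
    unfolding indep_var_def indep_vars_def2
  proof (intro conjI ballI)
    fix b :: bool
    show "random_variable (case_bool borel borel b) (case_bool X Y b)"
      using meas_FF_M[OF X] meas_FF_M[OF Y] by (cases b) auto
  next
    show "indep_sets (\<lambda>i. {case_bool X Y i -` A \<inter> space M |A. A \<in> sets (case_bool borel borel i)}) UNIV"
    proof (rule indep_sets_mono_sets[OF ind2])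
      fix b :: bool
      show "{case_bool X Y b -` A \<inter> space M |A. A \<in> sets (case_bool borel borel b)} \<subseteq> sets (FF (case_bool J1 J2 b))"
        using measurable_sets[OF X] measurable_sets[OF Y] by (cases b) auto
    qed
  qed
qed

lemma indep_FF_integral:
  fixes X Y :: "'w \<Rightarrow> real"
  assumes J: "J1 \<inter> J2 = {}" and X: "X \<in> borel_measurable (FF J1)" and Y: "Y \<in> borel_measurable (FF J2)"
    and iX: "integrable M X" and iY: "integrable M Y"
  shows "integrable M (\<lambda>\<omega>. X \<omega> * Y \<omega>)" "expectation (\<lambda>\<omega>. X \<omega> * Y \<omega>) = expectation X * expectation Y"
  using indep_var_integrable[OF indep_FF[OF J X Y] iX iY] indep_var_lebesgue_integral[OF indep_FF[OF J X Y] iX iY]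
  by auto

end

lemma mv_meas[measurable]:
  "g \<in> borel_measurable N \<Longrightarrow> (\<lambda>\<omega>. (D::real^'n^'m) *v g \<omega>) \<in> borel_measurable N"
  by (rule measurable_compose[OF _ borel_measurable_continuous_onI])
     (auto intro: linear_continuous_on matrix_vector_mul_bounded_linear)

lemma vec_nth_meas[measurable]:
  "g \<in> borel_measurable N \<Longrightarrow> (\<lambda>\<omega>. (g \<omega> :: real^'n) $ k) \<in> borel_measurable N"
proof -
  assume [measurable]: "g \<in> borel_measurable N"
  have "(\<lambda>\<omega>. g \<omega> $ k) = (\<lambda>\<omega>. g \<omega> \<bullet> axis k 1)" by (simp add: inner_axis)
  also have "\<dots> \<in> borel_measurable N" by measurable
  finally show ?thesis .
qed

context lqr begin

definition Past :: "nat \<Rightarrow> src set" where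
  "Past t = insert Src0 (SrcWX ` {..<t} \<union> SrcWU ` {..<t} \<union> SrcXi ` {..<t})"

lemma x0_FF: "Src0 \<in> J \<Longrightarrow> x0 \<in> borel_measurable (FF J)"
  by (rule gen_meas_FF) (auto simp: Ev_def)
lemma wx_FF: "SrcWX t \<in> J \<Longrightarrow> wx t \<in> borel_measurable (FF J)"
  by (rule gen_meas_FF) (auto simp: Ev_def)
lemma wu_FF: "SrcWU t \<in> J \<Longrightarrow> wu t \<in> borel_measurable (FF J)"
  by (rule gen_meas_FF) (auto simp: Ev_def)
lemma xi_FF: "SrcXi t \<in> J \<Longrightarrow> xi t \<in> borel_measurable (FF J)"
  by (rule gen_meas_FF) (auto simp: Ev_def)

lemma step_eq: "xs (Suc t) \<omega> = (A + wx t \<omega> * C) * xs t \<omega> + B \<bullet> us t \<omega> + wu t \<omega> \<bullet> (D *v us t \<omega>)"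
  unfolding x_step by (simp add: inner_add_left dot_lmul_matrix)

lemma xs_FF: "Past t \<subseteq> J \<Longrightarrow> xs t \<in> borel_measurable (FF J)"
proof (induction t)
  case 0
  then show ?case using x0_FF[of J] by (simp add: x_init Past_def)
next
  case (Suc t)
  have "Past t \<subseteq> Past (Suc t)" unfolding Past_def by auto
  with Suc have [measurable]: "xs t \<in> borel_measurable (FF J)" by blast
  have [measurable]: "wx t \<in> borel_measurable (FF J)" "wu t \<in> borel_measurable (FF J)" "xi t \<in> borel_measurable (FF J)"
    using Suc.prems by (auto intro!: wx_FF wu_FF xi_FF simp: Past_def)
  show ?case unfolding step_eq[abs_def] u_def by measurable
qed

lemma xs_rv[measurable]: "xs t \<in> borel_measurable M"
  by (rule meas_FF_M[OF xs_FF[OF order_refl]])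

definition Lf :: "nat \<Rightarrow> real \<Rightarrow> real \<Rightarrow> real^'n \<Rightarrow> 'w \<Rightarrow> real" where
  "Lf t c0 c1 d \<omega> = c0 + wx t \<omega> * c1 + wu t \<omega> \<bullet> d"

lemma Lf_FF: "SrcWX t \<in> J \<Longrightarrow> SrcWU t \<in> J \<Longrightarrow> Lf t c0 c1 d \<in> borel_measurable (FF J)"
  using wx_FF[of t J] wu_FF[of t J] unfolding Lf_def[abs_def] by measurable

lemma wu_comp_FF: "SrcWU t \<in> J \<Longrightarrow> (\<lambda>\<omega>. wu t \<omega> $ k) \<in> borel_measurable (FF J)"
  using wu_FF[of t J] by measurable

lemma wxwu: "integrable M (\<lambda>\<omega>. wx t \<omega> * wu t \<omega> $ k)" "expectation (\<lambda>\<omega>. wx t \<omega> * wu t \<omega> $ k) = 0"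
  using indep_FF_integral[of "{SrcWX t}" "{SrcWU t}", OF _ wx_FF wu_comp_FF] wx_int wu_int wx_mom wu_mom
  by auto

lemma Ez: "integrable M (\<lambda>\<omega>. wu t \<omega> \<bullet> d)" "expectation (\<lambda>\<omega>. wu t \<omega> \<bullet> d) = 0"
proof -
  have e: "(\<lambda>\<omega>. wu t \<omega> \<bullet> d) = (\<lambda>\<omega>. \<Sum>k\<in>UNIV. d $ k * wu t \<omega> $ k)"
    by (simp add: inner_vec_def mult.commute)
  show "integrable M (\<lambda>\<omega>. wu t \<omega> \<bullet> d)" unfolding e using wu_int by auto
  show "expectation (\<lambda>\<omega>. wu t \<omega> \<bullet> d) = 0" unfolding e using wu_int wu_mom
    by (simp add: integral_sum)
qed

lemma Ewz: "integrable M (\<lambda>\<omega>. wx t \<omega> * (wu t \<omega> \<bullet> d))" "expectation (\<lambda>\<omega>. wx t \<omega> * (wu t \<omega> \<bullet> d)) = 0"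
proof -
  have e: "(\<lambda>\<omega>. wx t \<omega> * (wu t \<omega> \<bullet> d)) = (\<lambda>\<omega>. \<Sum>k\<in>UNIV. d $ k * (wx t \<omega> * wu t \<omega> $ k))"
    by (simp add: inner_vec_def sum_distrib_left algebra_simps)
  show "integrable M (\<lambda>\<omega>. wx t \<omega> * (wu t \<omega> \<bullet> d))" unfolding e using wxwu by auto
  show "expectation (\<lambda>\<omega>. wx t \<omega> * (wu t \<omega> \<bullet> d)) = 0" unfolding e using wxwu
    by (simp add: integral_sum)
qed

lemma Ezz: "integrable M (\<lambda>\<omega>. (wu t \<omega> \<bullet> d) * (wu t \<omega> \<bullet> f))" "expectation (\<lambda>\<omega>. (wu t \<omega> \<bullet> d) * (wu t \<omega> \<bullet> f)) = d \<bullet> f"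
proof -
  have e: "(\<lambda>\<omega>. (wu t \<omega> \<bullet> d) * (wu t \<omega> \<bullet> f)) = (\<lambda>\<omega>. \<Sum>k\<in>UNIV. \<Sum>l\<in>UNIV. (d $ k * f $ l) * (wu t \<omega> $ k * wu t \<omega> $ l))"
    by (simp add: inner_vec_def sum_product algebra_simps)
  show "integrable M (\<lambda>\<omega>. (wu t \<omega> \<bullet> d) * (wu t \<omega> \<bullet> f))" unfolding e using wu_int by auto
  have "expectation (\<lambda>\<omega>. (wu t \<omega> \<bullet> d) * (wu t \<omega> \<bullet> f)) = (\<Sum>k\<in>UNIV. \<Sum>l\<in>UNIV. (d $ k * f $ l) * (if k = l then 1 else 0))"
    unfolding e using wu_int wu_mom by (simp add: integral_sum)
  also have "\<dots> = d \<bullet> f" by (simp add: inner_vec_def if_distrib[of "\<lambda>x. _ * x"] sum.delta sum.delta' cong: if_cong)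
  finally show "expectation (\<lambda>\<omega>. (wu t \<omega> \<bullet> d) * (wu t \<omega> \<bullet> f)) = d \<bullet> f" .
qed

lemma L_prod:
  "integrable M (\<lambda>\<omega>. Lf t c0 c1 d \<omega> * Lf t e0 e1 f \<omega>)"
  "expectation (\<lambda>\<omega>. Lf t c0 c1 d \<omega> * Lf t e0 e1 f \<omega>) = c0 * e0 + c1 * e1 + d \<bullet> f"
proof -
  have e: "(\<lambda>\<omega>. Lf t c0 c1 d \<omega> * Lf t e0 e1 f \<omega>) = (\<lambda>\<omega>. c0 * e0 + (c0 * e1 + c1 * e0) * wx t \<omega>
     + c0 * (wu t \<omega> \<bullet> f) + e0 * (wu t \<omega> \<bullet> d) + (c1 * e1) * (wx t \<omega>)^2
     + c1 * (wx t \<omega> * (wu t \<omega> \<bullet> f)) + e1 * (wx t \<omega> * (wu t \<omega> \<bullet> d))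
     + (wu t \<omega> \<bullet> d) * (wu t \<omega> \<bullet> f))"
    by (simp add: Lf_def fun_eq_iff algebra_simps power2_eq_square)
  show "integrable M (\<lambda>\<omega>. Lf t c0 c1 d \<omega> * Lf t e0 e1 f \<omega>)"
    unfolding e using wx_int Ez Ewz Ezz by simp
  show "expectation (\<lambda>\<omega>. Lf t c0 c1 d \<omega> * Lf t e0 e1 f \<omega>) = c0 * e0 + c1 * e1 + d \<bullet> f"
    unfolding e using wx_int wx_mom Ez Ewz Ezz by (simp add: prob_space)
qed

lemma L_int: "integrable M (Lf t c0 c1 d)" "expectation (Lf t c0 c1 d) = c0"
proof -
  have e: "Lf t c0 c1 d = (\<lambda>\<omega>. c0 + c1 * wx t \<omega> + wu t \<omega> \<bullet> d)"
    by (simp add: Lf_def fun_eq_iff algebra_simps)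
  show "integrable M (Lf t c0 c1 d)" unfolding e using wx_int Ez by simp
  show "expectation (Lf t c0 c1 d) = c0" unfolding e using wx_int wx_mom Ez by (simp add: prob_space)
qed

end

lemma inner_mv_cols: "(z::real^'n) \<bullet> ((D::real^'n^'n) *v v) = (\<Sum>i\<in>UNIV. v $ i * (z \<bullet> (\<chi> k. D $ k $ i)))"
proof -
  have "z \<bullet> (D *v v) = (\<Sum>k\<in>UNIV. \<Sum>i\<in>UNIV. z $ k * (D $ k $ i * v $ i))"
    by (simp add: inner_vec_def matrix_vector_mult_def sum_distrib_left)
  also have "\<dots> = (\<Sum>i\<in>UNIV. \<Sum>k\<in>UNIV. z $ k * (D $ k $ i * v $ i))" by (rule sum.swap)
  also have "\<dots> = (\<Sum>i\<in>UNIV. v $ i * (z \<bullet> (\<chi> k. D $ k $ i)))"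
    by (simp add: inner_vec_def sum_distrib_left algebra_simps)
  finally show ?thesis .
qed

context lqr begin

definition col :: "'n \<Rightarrow> real^'n" where "col i = (\<chi> k. D $ k $ i)"

abbreviation "aL t \<equiv> Lf t (A - B \<bullet> K) C (- (D *v K))"
abbreviation "bL t i \<equiv> Lf t (B $ i) 0 (col i)"

definition m :: "nat \<Rightarrow> real" where "m t = expectation (\<lambda>\<omega>. (xs t \<omega>)^2)"

lemma decomp: "xs (Suc t) \<omega> = xs t \<omega> * aL t \<omega> + (\<Sum>i\<in>UNIV. xi t \<omega> $ i * bL t i \<omega>)"
proof -
  let ?x = "xs t \<omega>" and ?w = "wx t \<omega>" and ?z = "wu t \<omega>" and ?v = "xi t \<omega>"
  have Bv: "B \<bullet> ?v = (\<Sum>i\<in>UNIV. ?v $ i * B $ i)" by (simp add: inner_vec_def mult.commute)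
  have "xs (Suc t) \<omega> = (A + ?w * C) * ?x - ?x * (B \<bullet> K) + B \<bullet> ?v - ?x * (?z \<bullet> (D *v K)) + ?z \<bullet> (D *v ?v)"
    unfolding step_eq u_def
    by (simp add: inner_add_right matrix_vector_right_distrib mvm_uminus matrix_vector_mult_scaleR algebra_simps)
  also have "\<dots> = ?x * aL t \<omega> + ((\<Sum>i\<in>UNIV. ?v $ i * B $ i) + (\<Sum>i\<in>UNIV. ?v $ i * (?z \<bullet> col i)))"
    unfolding Bv inner_mv_cols[of ?z D ?v] by (simp add: Lf_def col_def algebra_simps)
  also have "\<dots> = ?x * aL t \<omega> + (\<Sum>i\<in>UNIV. ?v $ i * bL t i \<omega>)"
    by (simp add: Lf_def sum.distrib[symmetric] algebra_simps)
  finally show ?thesis .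
qed

lemma sq_decomp: "(xs (Suc t) \<omega>)^2 = (xs t \<omega>)^2 * (aL t \<omega> * aL t \<omega>)
   + 2 * (\<Sum>i\<in>UNIV. (xs t \<omega> * (aL t \<omega> * bL t i \<omega>)) * xi t \<omega> $ i)
   + (\<Sum>i\<in>UNIV. \<Sum>j\<in>UNIV. (bL t i \<omega> * bL t j \<omega>) * (xi t \<omega> $ i * xi t \<omega> $ j))"
  unfolding decomp power2_eq_square
  by (simp add: sum_product sum_distrib_left algebra_simps)

definition NW :: "nat \<Rightarrow> src set" where "NW t = {SrcWX t, SrcWU t}"

lemma disj: "Past t \<inter> NW t = {}" "(Past t \<union> NW t) \<inter> {SrcXi t} = {}" "NW t \<inter> {SrcXi t} = {}"
  unfolding Past_def NW_def by auto

lemma Lf_NW: "Lf t c0 c1 d \<in> borel_measurable (FF (NW t))"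
  by (rule Lf_FF) (auto simp: NW_def)

lemma Lf_PNW: "Lf t c0 c1 d \<in> borel_measurable (FF (Past t \<union> NW t))"
  by (rule Lf_FF) (auto simp: NW_def)

lemma xi_X: "(\<lambda>\<omega>. xi t \<omega> $ i) \<in> borel_measurable (FF {SrcXi t})"
  using xi_FF[of t "{SrcXi t}"] by measurable

lemma xi_XX: "(\<lambda>\<omega>. xi t \<omega> $ i * xi t \<omega> $ j) \<in> borel_measurable (FF {SrcXi t})"
  using xi_FF[of t "{SrcXi t}"] by measurable

lemmas gm = gauss_moments[OF Sigpd xi_dist]

lemma step:
  assumes ix: "integrable M (\<lambda>\<omega>. (xs t \<omega>)^2)"
  shows "integrable M (\<lambda>\<omega>. (xs (Suc t) \<omega>)^2)"
    "m (Suc t) = ((A - B \<bullet> K)^2 + C^2 + (D *v K) \<bullet> (D *v K)) * m t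
        + (\<Sum>i\<in>UNIV. \<Sum>j\<in>UNIV. (B $ i * B $ j + col i \<bullet> col j) * Sig $ i $ j)"
proof -
  have xP[measurable]: "xs t \<in> borel_measurable (FF (Past t))" by (rule xs_FF) simp
  have xPN[measurable]: "xs t \<in> borel_measurable (FF (Past t \<union> NW t))" by (rule xs_FF) simp
  have ix1: "integrable M (xs t)" by (rule square_integrable_imp_integrable[OF xs_rv ix])
  note LNW[measurable] = Lf_NW and LPNW[measurable] = Lf_PNW
  have m1: "(\<lambda>\<omega>. (xs t \<omega>)^2) \<in> borel_measurable (FF (Past t))" by measurable
  have m2: "(\<lambda>\<omega>. aL t \<omega> * aL t \<omega>) \<in> borel_measurable (FF (NW t))" by measurable
  have m3: "(\<lambda>\<omega>. aL t \<omega> * bL t i \<omega>) \<in> borel_measurable (FF (NW t))" for i by measurable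
  have m4: "(\<lambda>\<omega>. xs t \<omega> * (aL t \<omega> * bL t i \<omega>)) \<in> borel_measurable (FF (Past t \<union> NW t))" for i by measurable
  have m5: "(\<lambda>\<omega>. bL t i \<omega> * bL t j \<omega>) \<in> borel_measurable (FF (NW t))" for i j by measurable
  have T1: "integrable M (\<lambda>\<omega>. (xs t \<omega>)^2 * (aL t \<omega> * aL t \<omega>))"
      "expectation (\<lambda>\<omega>. (xs t \<omega>)^2 * (aL t \<omega> * aL t \<omega>)) = m t * ((A - B \<bullet> K)^2 + C^2 + (D *v K) \<bullet> (D *v K))"
    using indep_FF_integral[OF disj(1)[of t] m1 m2 ix L_prod(1)] L_prod(2)
    by (auto simp: m_def power2_eq_square)
  have T2a: "integrable M (\<lambda>\<omega>. xs t \<omega> * (aL t \<omega> * bL t i \<omega>))" for i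
    using indep_FF_integral[OF disj(1)[of t] xP m3 ix1 L_prod(1)] by auto
  have T2: "integrable M (\<lambda>\<omega>. (xs t \<omega> * (aL t \<omega> * bL t i \<omega>)) * xi t \<omega> $ i)"
     "expectation (\<lambda>\<omega>. (xs t \<omega> * (aL t \<omega> * bL t i \<omega>)) * xi t \<omega> $ i) = 0" for i
    using indep_FF_integral[OF disj(2)[of t] m4 xi_X T2a gm(1)] gm(2) by auto
  have T3: "integrable M (\<lambda>\<omega>. (bL t i \<omega> * bL t j \<omega>) * (xi t \<omega> $ i * xi t \<omega> $ j))"
     "expectation (\<lambda>\<omega>. (bL t i \<omega> * bL t j \<omega>) * (xi t \<omega> $ i * xi t \<omega> $ j))
        = (B $ i * B $ j + col i \<bullet> col j) * Sig $ i $ j" for i j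
    using indep_FF_integral[OF disj(3)[of t] m5 xi_XX L_prod(1) gm(3)] gm(4) L_prod(2) by auto
  have e: "(\<lambda>\<omega>. (xs (Suc t) \<omega>)^2) = (\<lambda>\<omega>. (xs t \<omega>)^2 * (aL t \<omega> * aL t \<omega>)
   + 2 * (\<Sum>i\<in>UNIV. (xs t \<omega> * (aL t \<omega> * bL t i \<omega>)) * xi t \<omega> $ i)
   + (\<Sum>i\<in>UNIV. \<Sum>j\<in>UNIV. (bL t i \<omega> * bL t j \<omega>) * (xi t \<omega> $ i * xi t \<omega> $ j)))"
    by (rule ext) (rule sq_decomp)
  show "integrable M (\<lambda>\<omega>. (xs (Suc t) \<omega>)^2)"
    unfolding e using T1 T2 T3 by simp
  show "m (Suc t) = ((A - B \<bullet> K)^2 + C^2 + (D *v K) \<bullet> (D *v K)) * m t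
        + (\<Sum>i\<in>UNIV. \<Sum>j\<in>UNIV. (B $ i * B $ j + col i \<bullet> col j) * Sig $ i $ j)"
    unfolding m_def[of "Suc t"] e using T1 T2 T3 by (simp add: integral_sum)
qed

lemma sq_int: "integrable M (\<lambda>\<omega>. (xs t \<omega>)^2)"
  by (induction t) (auto simp: x_init x0_sq intro: step(1))

end

lemma series_rec:
  fixes m :: "nat \<Rightarrow> real" and g V c :: real
  assumes g: "0 < g" "g < 1" and V: "0 \<le> V" "g * V < 1" and c: "0 \<le> c"
    and mpos: "\<And>t. 0 \<le> m t" and rec: "\<And>t. m (Suc t) = V * m t + c"
  shows "summable (\<lambda>t. g^t * m t)" "(\<Sum>t. g^t * m t) * (1 - g * V) = m 0 + c * g / (1 - g)"
proof -
  let ?f = "\<lambda>t. g^t * m t"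
  have fpos: "0 \<le> ?f t" for t using g mpos by simp
  have geo: "(\<Sum>t<N. g^t) \<le> 1 / (1 - g)" for N
  proof -
    have "(\<Sum>t<N. g^t) = (1 - g^N) / (1 - g)" using g by (simp add: sum_gp_strict)
    also have "\<dots> \<le> 1 / (1 - g)" using g by (intro divide_right_mono) auto
    finally show ?thesis .
  qed
  have PS: "(\<Sum>t<Suc N. ?f t) = m 0 + g * V * (\<Sum>t<N. ?f t) + c * g * (\<Sum>t<N. g^t)" for N
  proof -
    have "(\<Sum>t<Suc N. ?f t) = ?f 0 + (\<Sum>t<N. ?f (Suc t))" by (rule sum.lessThan_Suc_shift)
    also have "(\<Sum>t<N. ?f (Suc t)) = (\<Sum>t<N. g * V * ?f t + c * g * g^t)"
      by (intro sum.cong refl) (simp add: rec algebra_simps)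
    also have "\<dots> = g * V * (\<Sum>t<N. ?f t) + c * g * (\<Sum>t<N. g^t)"
      by (simp add: sum.distrib sum_distrib_left)
    finally show ?thesis by simp
  qed
  have bnd: "(\<Sum>t<N. ?f t) \<le> (m 0 + c * g / (1 - g)) / (1 - g * V)" for N
  proof -
    have "(\<Sum>t<N. ?f t) \<le> (\<Sum>t<Suc N. ?f t)" by (simp add: fpos)
    also have "\<dots> \<le> m 0 + g * V * (\<Sum>t<N. ?f t) + c * g * (1 / (1 - g))"
      unfolding PS using geo[of N] c g by (intro add_left_mono mult_left_mono) auto
    finally have "(\<Sum>t<N. ?f t) * (1 - g * V) \<le> m 0 + c * g / (1 - g)" by (simp add: algebra_simps)
    then show ?thesis using V by (simp add: field_simps)
  qed
  show sf: "summable ?f" by (rule summableI_nonneg_bounded[OF fpos bnd])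
  have sg: "summable (\<lambda>t. g^t)" using g by simp
  have "(\<Sum>t. ?f t) - ?f 0 = (\<Sum>t. ?f (Suc t))" by (rule suminf_split_head[OF sf, symmetric])
  also have "\<dots> = (\<Sum>t. g * V * ?f t + c * g * g^t)"
    by (intro arg_cong[where f=suminf] ext) (simp add: rec algebra_simps)
  also have "\<dots> = g * V * (\<Sum>t. ?f t) + c * g * (\<Sum>t. g^t)"
    using sf sg by (simp add: suminf_add[symmetric] suminf_mult summable_mult)
  also have "(\<Sum>t. g^t) = 1 / (1 - g)" using g by (simp add: suminf_geometric)
  finally show "(\<Sum>t. ?f t) * (1 - g * V) = m 0 + c * g / (1 - g)" by (simp add: algebra_simps)
qed

context lqr begin

lemma VK_eq: "V_K A B C D K = (A - B \<bullet> K)^2 + C^2 + (D *v K) \<bullet> (D *v K)"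
proof -
  have o: "outer B *v K = (B \<bullet> K) *\<^sub>R B"
    by (simp add: outer_def vec_eq_iff matrix_vector_mult_def inner_vec_def sum_distrib_left algebra_simps)
  have d: "K \<bullet> ((transpose D ** D) *v K) = (D *v K) \<bullet> (D *v K)"
    by (metis dot_lmul_matrix inner_commute matrix_vector_mul_assoc vector_transpose_matrix)
  show ?thesis
    unfolding V_K_def matrix_vector_mult_add_rdistrib inner_add_right o d
    by (simp add: power2_eq_square inner_commute algebra_simps)
qed

definition cc :: real where
  "cc = (\<Sum>i\<in>UNIV. \<Sum>j\<in>UNIV. (B $ i * B $ j + col i \<bullet> col j) * Sig $ i $ j)"

lemma col_inner: "col i \<bullet> col j = (\<Sum>k\<in>UNIV. D $ k $ i * D $ k $ j)"
  by (simp add: col_def inner_vec_def)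

lemma cc_trace: "cc = trace (Sig ** (outer B + transpose D ** D))"
proof -
  have "trace (Sig ** (outer B + transpose D ** D))
      = (\<Sum>i\<in>UNIV. \<Sum>j\<in>UNIV. Sig $ i $ j * (B $ j * B $ i + (\<Sum>k\<in>UNIV. D $ k $ j * D $ k $ i)))"
    by (simp add: trace_def matrix_matrix_mult_def outer_def transpose_def)
  also have "\<dots> = cc"
    unfolding cc_def col_inner by (intro sum.cong refl) (simp add: mult.commute)
  finally show ?thesis by simp
qed

lemma cc_nonneg: "0 \<le> cc"
proof -
  have q: "v \<bullet> (Sig *v v) = (\<Sum>i\<in>UNIV. \<Sum>j\<in>UNIV. v $ i * v $ j * Sig $ i $ j)" for v
    by (simp add: inner_vec_def matrix_vector_mult_def sum_distrib_left mult.commute mult.left_commute)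
  have "cc = (\<Sum>i\<in>UNIV. \<Sum>j\<in>UNIV. B $ i * B $ j * Sig $ i $ j)
      + (\<Sum>i\<in>UNIV. \<Sum>j\<in>UNIV. \<Sum>k\<in>UNIV. D $ k $ i * D $ k $ j * Sig $ i $ j)"
    unfolding cc_def col_inner by (simp add: sum.distrib[symmetric] distrib_right sum_distrib_right)
  also have "(\<Sum>i\<in>UNIV. \<Sum>j\<in>UNIV. \<Sum>k\<in>UNIV. D $ k $ i * D $ k $ j * Sig $ i $ j)
      = (\<Sum>k\<in>UNIV. \<Sum>i\<in>UNIV. \<Sum>j\<in>UNIV. D $ k $ i * D $ k $ j * Sig $ i $ j)"
    by (subst sum.swap) (subst (2) sum.swap, rule refl)
  also have "\<dots> = (\<Sum>k\<in>UNIV. (D $ k) \<bullet> (Sig *v (D $ k)))" unfolding q ..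
  also have "(\<Sum>i\<in>UNIV. \<Sum>j\<in>UNIV. B $ i * B $ j * Sig $ i $ j) = B \<bullet> (Sig *v B)" unfolding q ..
  finally have "cc = B \<bullet> (Sig *v B) + (\<Sum>k\<in>UNIV. (D $ k) \<bullet> (Sig *v (D $ k)))" .
  also have "\<dots> \<ge> 0" using sym_pd_nonneg[OF Sigpd] by (intro add_nonneg_nonneg sum_nonneg) auto
  finally show ?thesis .
qed

end

context lqr begin

abbreviation "SS \<equiv> matrix_inv Sig"
abbreviation "PP \<equiv> (2 * pi) ^ CARD('n) * det Sig"

lemma PP_pos: "0 < PP"
proof -
  have "0 < sqrt PP" by (rule gauss_basic(1)[OF Sigpd xi_dist[of 0]])
  then show ?thesis by simp
qed

lemma det_pos: "0 < det Sig"
proof -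
  have "0 < (2 * pi) ^ CARD('n)" by simp
  then show ?thesis using PP_pos by (simp only: zero_less_mult_iff) linarith
qed

lemma Sig_sym: "Sig $ j $ i = Sig $ i $ j"
proof -
  have "transpose Sig = Sig" using Sigpd sym_pd_def by blast
  then show ?thesis by (metis transpose_def vec_lambda_beta)
qed

lemma R_sym: "R $ j $ i = R $ i $ j"
proof -
  have "transpose R = R" using Rpd sym_pd_def by blast
  then show ?thesis by (metis transpose_def vec_lambda_beta)
qed

lemma logpi: "ln (policy_dens K Sig (xs t \<omega>) (us t \<omega>)) = - (1/2) * (xi t \<omega> \<bullet> (SS *v xi t \<omega>)) - ln PP / 2"
proof -
  have "policy_dens K Sig (xs t \<omega>) (us t \<omega>) = exp (- (1/2) * (xi t \<omega> \<bullet> (SS *v xi t \<omega>))) / sqrt PP"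
    unfolding policy_dens_def gauss_dens_def u_def by simp
  then show ?thesis using PP_pos det_pos by (simp add: ln_div ln_sqrt)
qed

lemma quad_sum: "v \<bullet> (N *v v) = (\<Sum>i\<in>UNIV. \<Sum>j\<in>UNIV. N $ i $ j * (v $ i * v $ j))" for N :: "real^'n^'n"
  by (simp add: inner_vec_def matrix_vector_mult_def sum_distrib_left algebra_simps)

lemma EqN: "integrable M (\<lambda>\<omega>. xi t \<omega> \<bullet> (N *v xi t \<omega>))"
  "expectation (\<lambda>\<omega>. xi t \<omega> \<bullet> (N *v xi t \<omega>)) = (\<Sum>i\<in>UNIV. \<Sum>j\<in>UNIV. N $ i $ j * Sig $ i $ j)"
  unfolding quad_sum using gm(3,4) by (auto simp: integral_sum)

lemma EqS: "integrable M (\<lambda>\<omega>. xi t \<omega> \<bullet> (SS *v xi t \<omega>))"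
  "expectation (\<lambda>\<omega>. xi t \<omega> \<bullet> (SS *v xi t \<omega>)) = real CARD('n)"
proof -
  show "integrable M (\<lambda>\<omega>. xi t \<omega> \<bullet> (SS *v xi t \<omega>))" by (rule EqN)
  have "(\<Sum>i\<in>UNIV. \<Sum>j\<in>UNIV. SS $ i $ j * Sig $ i $ j) = trace (SS ** Sig)"
    unfolding trace_def matrix_matrix_mult_def by (simp add: Sig_sym)
  also have "\<dots> = real CARD('n)"
    using matrix_inv_props(1)[OF sym_pd_invertible[OF Sigpd]] by (simp add: trace_I)
  finally show "expectation (\<lambda>\<omega>. xi t \<omega> \<bullet> (SS *v xi t \<omega>)) = real CARD('n)"
    using EqN(2) by simp
qed

lemma EqR: "integrable M (\<lambda>\<omega>. xi t \<omega> \<bullet> (R *v xi t \<omega>))"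
  "expectation (\<lambda>\<omega>. xi t \<omega> \<bullet> (R *v xi t \<omega>)) = trace (Sig ** R)"
proof -
  show "integrable M (\<lambda>\<omega>. xi t \<omega> \<bullet> (R *v xi t \<omega>))" by (rule EqN)
  have "(\<Sum>i\<in>UNIV. \<Sum>j\<in>UNIV. R $ i $ j * Sig $ i $ j) = trace (Sig ** R)"
    unfolding trace_def matrix_matrix_mult_def by (simp add: R_sym mult.commute)
  then show "expectation (\<lambda>\<omega>. xi t \<omega> \<bullet> (R *v xi t \<omega>)) = trace (Sig ** R)"
    using EqN(2) by simp
qed

lemma Exxi: "integrable M (\<lambda>\<omega>. xs t \<omega> * (xi t \<omega> \<bullet> a))" "expectation (\<lambda>\<omega>. xs t \<omega> * (xi t \<omega> \<bullet> a)) = 0"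
proof -
  have dj: "Past t \<inter> {SrcXi t} = {}" unfolding Past_def by auto
  have xP: "xs t \<in> borel_measurable (FF (Past t))" by (rule xs_FF) simp
  have ix1: "integrable M (xs t)" by (rule square_integrable_imp_integrable[OF xs_rv sq_int])
  have I: "integrable M (\<lambda>\<omega>. xs t \<omega> * xi t \<omega> $ j)" "expectation (\<lambda>\<omega>. xs t \<omega> * xi t \<omega> $ j) = 0" for j
    using indep_FF_integral[OF dj xP xi_X ix1 gm(1)] gm(2) by auto
  have e: "(\<lambda>\<omega>. xs t \<omega> * (xi t \<omega> \<bullet> a)) = (\<lambda>\<omega>. \<Sum>j\<in>UNIV. a $ j * (xs t \<omega> * xi t \<omega> $ j))"
    by (simp add: inner_vec_def sum_distrib_left algebra_simps)
  show "integrable M (\<lambda>\<omega>. xs t \<omega> * (xi t \<omega> \<bullet> a))" unfolding e using I by auto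
  show "expectation (\<lambda>\<omega>. xs t \<omega> * (xi t \<omega> \<bullet> a)) = 0" unfolding e using I by (simp add: integral_sum)
qed

lemma uRu_eq: "us t \<omega> \<bullet> (R *v us t \<omega>) = (K \<bullet> (R *v K)) * (xs t \<omega>)^2 - 2 * (xs t \<omega> * (xi t \<omega> \<bullet> (R *v K)))
   + xi t \<omega> \<bullet> (R *v xi t \<omega>)"
proof -
  have TR: "transpose R = R" using Rpd sym_pd_def by blast
  have s: "K \<bullet> (R *v xi t \<omega>) = xi t \<omega> \<bullet> (R *v K)" by (rule inner_transpose_sym[OF TR])
  show ?thesis unfolding u_def
    by (simp add: matrix_vector_right_distrib mvm_uminus matrix_vector_mult_scaleR inner_add_left
        inner_add_right s power2_eq_square algebra_simps)
qed

lemma EuRu: "integrable M (\<lambda>\<omega>. us t \<omega> \<bullet> (R *v us t \<omega>))"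
  "expectation (\<lambda>\<omega>. us t \<omega> \<bullet> (R *v us t \<omega>)) = (K \<bullet> (R *v K)) * m t + trace (Sig ** R)"
  unfolding uRu_eq using sq_int Exxi EqR by (auto simp: m_def)

end

context lqr begin

lemma SS_nonneg: "0 \<le> v \<bullet> (SS *v v)"
proof -
  have i: "invertible Sig" by (rule sym_pd_invertible[OF Sigpd])
  let ?w = "SS *v v"
  have v: "v = Sig *v ?w" by (simp add: matrix_vector_mul_assoc matrix_inv_props(2)[OF i])
  have "v \<bullet> ?w = ?w \<bullet> (Sig *v ?w)" by (subst (1) v) (simp add: inner_commute)
  then show ?thesis using sym_pd_nonneg[OF Sigpd, of ?w] by simp
qed

definition kR :: real where "kR = K \<bullet> (R *v K)"
definition C0 :: real where "C0 = trace (Sig ** R) - tau / 2 * (real CARD('n) + ln PP)"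
definition C1 :: real where "C1 = trace (Sig ** R) + tau / 2 * real CARD('n) + tau * \<bar>ln PP / 2\<bar>"

lemma kR_nonneg: "0 \<le> kR" unfolding kR_def by (rule sym_pd_nonneg[OF Rpd])

definition hh :: "nat \<Rightarrow> 'w \<Rightarrow> real" where
  "hh t \<omega> = Q * (xs t \<omega>)^2 + us t \<omega> \<bullet> (R *v us t \<omega>) + tau * ln (policy_dens K Sig (xs t \<omega>) (us t \<omega>))"

definition hb :: "nat \<Rightarrow> 'w \<Rightarrow> real" where
  "hb t \<omega> = Q * (xs t \<omega>)^2 + us t \<omega> \<bullet> (R *v us t \<omega>) + tau / 2 * (xi t \<omega> \<bullet> (SS *v xi t \<omega>)) + tau * \<bar>ln PP / 2\<bar>"

lemma hh_eq: "hh t = (\<lambda>\<omega>. Q * (xs t \<omega>)^2 + us t \<omega> \<bullet> (R *v us t \<omega>) - tau / 2 * (xi t \<omega> \<bullet> (SS *v xi t \<omega>)) - tau * (ln PP / 2))"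
  unfolding hh_def[abs_def] logpi by (simp add: fun_eq_iff algebra_simps)

lemma m_nonneg: "0 \<le> m t" unfolding m_def by (rule integral_nonneg_AE) auto

lemma Ehh: "integrable M (hh t)" "expectation (hh t) = (Q + kR) * m t + C0"
proof -
  show "integrable M (hh t)" unfolding hh_eq using sq_int EuRu EqS by simp
  have "expectation (hh t) = Q * m t + (kR * m t + trace (Sig ** R)) - tau / 2 * real CARD('n) - tau * (ln PP / 2)"
    unfolding hh_eq using sq_int EuRu EqS by (simp add: m_def kR_def prob_space)
  then show "expectation (hh t) = (Q + kR) * m t + C0" by (simp add: C0_def algebra_simps)
qed

lemma Ehb: "integrable M (hb t)" "expectation (hb t) = (Q + kR) * m t + C1"
proof -
  show "integrable M (hb t)" unfolding hb_def[abs_def] using sq_int EuRu EqS by simp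
  have "expectation (hb t) = Q * m t + (kR * m t + trace (Sig ** R)) + tau / 2 * real CARD('n) + tau * \<bar>ln PP / 2\<bar>"
    unfolding hb_def[abs_def] using sq_int EuRu EqS by (simp add: m_def kR_def prob_space)
  then show "expectation (hb t) = (Q + kR) * m t + C1" by (simp add: C1_def algebra_simps)
qed

lemma hh_bound: "\<bar>hh t \<omega>\<bar> \<le> hb t \<omega>"
proof -
  have "0 \<le> us t \<omega> \<bullet> (R *v us t \<omega>)" by (rule sym_pd_nonneg[OF Rpd])
  moreover have "0 \<le> xi t \<omega> \<bullet> (SS *v xi t \<omega>)" by (rule SS_nonneg)
  moreover have "0 \<le> Q * (xs t \<omega>)^2" using Qpos by simp
  moreover have "\<bar>tau * (ln PP / 2)\<bar> = tau * \<bar>ln PP / 2\<bar>" using tau by (simp add: abs_mult)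
  moreover have "0 \<le> tau / 2 * (xi t \<omega> \<bullet> (SS *v xi t \<omega>))" using tau SS_nonneg by simp
  moreover have "\<bar>tau * (ln PP / 2)\<bar> \<le> tau * \<bar>ln PP / 2\<bar>" using tau by (simp add: abs_mult)
  ultimately show ?thesis unfolding hh_eq hb_def by (simp only: abs_le_iff) linarith
qed

lemma m_rec: "m (Suc t) = V_K A B C D K * m t + cc"
  using step(2)[OF sq_int] by (simp add: VK_eq cc_def)

lemma V_nonneg: "0 \<le> V_K A B C D K"
  unfolding VK_eq by (intro add_nonneg_nonneg) auto

lemma S_series:
  "summable (\<lambda>t. gam^t * m t)"
  "(\<Sum>t. gam^t * m t) * (1 - gam * V_K A B C D K) = m 0 + cc * gam / (1 - gam)"
  using series_rec[where m=m and g=gam and V="V_K A B C D K" and c=cc, OF gam V_nonneg stab cc_nonneg m_nonneg m_rec]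
  by auto

lemma f_eq:
  "expectation (\<lambda>\<omega>. \<Sum>t. gam ^ t * hh t \<omega>) = (Q + kR) * (\<Sum>t. gam^t * m t) + C0 / (1 - gam)"
proof -
  let ?F = "\<lambda>t \<omega>. gam ^ t * hh t \<omega>"
  have meas[measurable]: "hh t \<in> borel_measurable M" for t using Ehh(1) by auto
  have iF: "integrable M (?F t)" for t using Ehh(1) by simp
  have nF: "expectation (\<lambda>\<omega>. norm (?F t \<omega>)) \<le> gam ^ t * ((Q + kR) * m t + C1)" for t
  proof -
    have "expectation (\<lambda>\<omega>. norm (?F t \<omega>)) \<le> expectation (\<lambda>\<omega>. gam ^ t * hb t \<omega>)"
      using iF Ehb(1) hh_bound gam by (intro integral_mono) (auto simp: abs_mult intro!: mult_left_mono)
    also have "\<dots> = gam ^ t * ((Q + kR) * m t + C1)" using Ehb(2) by simp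
    finally show ?thesis .
  qed
  have sg: "summable (\<lambda>t. gam ^ t)" using gam by simp
  have sm: "summable (\<lambda>t. gam ^ t * m t)" by (rule S_series(1))
  have sb: "summable (\<lambda>t. gam ^ t * ((Q + kR) * m t + C1))"
    using summable_add[OF summable_mult[OF sm, of "Q + kR"] summable_mult2[OF sg, of C1]]
    by (simp add: algebra_simps)
  have sn: "summable (\<lambda>t. expectation (\<lambda>\<omega>. norm (?F t \<omega>)))"
    by (rule summable_comparison_test[OF _ sb]) (use nF in \<open>auto intro!: exI[of _ 0] integral_nonneg_AE\<close>)
  have AEs: "AE \<omega> in M. summable (\<lambda>t. norm (?F t \<omega>))"
  proof -
    have "(\<integral>\<^sup>+\<omega>. (\<Sum>t. ennreal (norm (?F t \<omega>))) \<partial>M) = (\<Sum>t. \<integral>\<^sup>+\<omega>. ennreal (norm (?F t \<omega>)) \<partial>M)"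
      by (rule nn_integral_suminf) auto
    also have "\<dots> = (\<Sum>t. ennreal (expectation (\<lambda>\<omega>. norm (?F t \<omega>))))"
      using iF by (intro arg_cong[where f=suminf] ext nn_integral_eq_integral) auto
    also have "\<dots> = ennreal (\<Sum>t. expectation (\<lambda>\<omega>. norm (?F t \<omega>)))"
      by (rule suminf_ennreal2[OF _ sn]) auto
    finally have "(\<integral>\<^sup>+\<omega>. (\<Sum>t. ennreal (norm (?F t \<omega>))) \<partial>M) \<noteq> \<infinity>" by simp
    then have "AE \<omega> in M. (\<Sum>t. ennreal (norm (?F t \<omega>))) \<noteq> \<infinity>"
      by (intro nn_integral_noteq_infinite) auto
    then show ?thesis
      by eventually_elim (auto intro: summable_suminf_not_top)
  qed
  have "expectation (\<lambda>\<omega>. \<Sum>t. ?F t \<omega>) = (\<Sum>t. expectation (?F t))"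
    by (rule integral_suminf[OF iF AEs sn])
  also have "\<dots> = (\<Sum>t. (Q + kR) * (gam ^ t * m t) + C0 * gam ^ t)"
    using Ehh(2) by (simp add: algebra_simps)
  also have "\<dots> = (Q + kR) * (\<Sum>t. gam^t * m t) + C0 * (\<Sum>t. gam ^ t)"
    using sm sg by (simp add: suminf_add[symmetric] suminf_mult summable_mult summable_mult2 suminf_mult2)
  also have "(\<Sum>t. gam ^ t) = 1 / (1 - gam)" using gam by (simp add: suminf_geometric)
  finally show ?thesis by simp
qed

end

theorem lemma10:
  fixes M :: "'w measure"
    and A C Q gam tau :: real
    and B :: "real^'n" and D R Sig :: "real^'n^'n" and K :: "real^'n"
    and x0 :: "'w \<Rightarrow> real"
    and wx :: "nat \<Rightarrow> 'w \<Rightarrow> real" and wu :: "nat \<Rightarrow> 'w \<Rightarrow> real^'n"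
    and xi :: "nat \<Rightarrow> 'w \<Rightarrow> real^'n"
    and xs :: "nat \<Rightarrow> 'w \<Rightarrow> real" and us :: "nat \<Rightarrow> 'w \<Rightarrow> real^'n"
  assumes P: "prob_space M"
    and Qpos: "Q > 0" and Rpd: "sym_pd R"
    and gam: "0 < gam" "gam < 1" and tau: "tau > 0"
    \<comment> \<open>(K, Sigma) in Omega\<close>
    and Sigpd: "sym_pd Sig" and stab: "gam * V_K A B C D K < 1"
    \<comment> \<open>primitive random variables\<close>
    and x0_rv: "x0 \<in> borel_measurable M"
    and x0_sq: "integrable M (\<lambda>\<omega>. (x0 \<omega>)^2)"
    and wx_rv: "\<And>t. wx t \<in> borel_measurable M"
    and wu_rv: "\<And>t. wu t \<in> borel_measurable M"
    and wx_int: "\<And>t. integrable M (wx t)" "\<And>t. integrable M (\<lambda>\<omega>. (wx t \<omega>)^2)"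
    and wx_mom: "\<And>t. prob_space.expectation M (wx t) = 0"
                "\<And>t. prob_space.expectation M (\<lambda>\<omega>. (wx t \<omega>)^2) = 1"
    and wu_int: "\<And>t i. integrable M (\<lambda>\<omega>. wu t \<omega> $ i)"
                "\<And>t i j. integrable M (\<lambda>\<omega>. wu t \<omega> $ i * wu t \<omega> $ j)"
    and wu_mom: "\<And>t i. prob_space.expectation M (\<lambda>\<omega>. wu t \<omega> $ i) = 0"
                "\<And>t i j. prob_space.expectation M (\<lambda>\<omega>. wu t \<omega> $ i * wu t \<omega> $ j)
                           = (if i = j then 1 else 0)"
    and xi_dist: "\<And>t. distributed M lborel (xi t) (\<lambda>v. ennreal (gauss_dens Sig 0 v))"
    and indep: "prob_space.indep_sets M
                  (\<lambda>s. case s of Src0 \<Rightarrow> gen_events M borel x0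
                              | SrcWX t \<Rightarrow> gen_events M borel (wx t)
                              | SrcWU t \<Rightarrow> gen_events M borel (wu t)
                              | SrcXi t \<Rightarrow> gen_events M borel (xi t)) UNIV"
    \<comment> \<open>Gaussian policy u_t ~ N(-K x_t, Sigma) and the dynamics\<close>
    and u_def: "\<And>t \<omega>. us t \<omega> = - (xs t \<omega> *\<^sub>R K) + xi t \<omega>"
    and x_init: "\<And>\<omega>. xs 0 \<omega> = x0 \<omega>"
    and x_step: "\<And>t \<omega>. xs (Suc t) \<omega> =
                    (A + wx t \<omega> * C) * xs t \<omega> + (B + wu t \<omega> v* D) \<bullet> us t \<omega>"
  defines "mu \<equiv> prob_space.expectation M (\<lambda>\<omega>. (x0 \<omega>)^2)"
    and "V \<equiv> V_K A B C D K"
    and "S \<equiv> (\<Sum>t. gam ^ t * prob_space.expectation M (\<lambda>\<omega>. (xs t \<omega>)^2))"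
    and "f \<equiv> prob_space.expectation M (\<lambda>\<omega>. \<Sum>t. gam ^ t *
               (Q * (xs t \<omega>)^2 + us t \<omega> \<bullet> (R *v us t \<omega>)
                + tau * ln (policy_dens K Sig (xs t \<omega>) (us t \<omega>))))"
  shows "(V \<noteq> 1 \<longrightarrow>
           S = mu * (\<Sum>t. (gam * V) ^ t)
               + trace (Sig ** (outer B + transpose D ** D)) / (1 - V)
                 * (1 / (1 - gam) - 1 / (1 - gam * V)))
       \<and> mu / (1 - gam * V) \<le> S
       \<and> S \<le> (f - (1 / (1 - gam)) * (trace (Sig ** R)
                 - tau / 2 * (real CARD('n) + ln ((2 * pi) ^ CARD('n) * det Sig)))) / Q"
proof -
  have "lqr M A C Q gam tau B D R Sig K x0 wx wu xi xs us"
    unfolding lqr_def lqr_axioms_def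
    by (intro conjI allI; rule assms)
  then interpret L: lqr M A C Q gam tau B D R Sig K x0 wx wu xi xs us .
  have mu: "mu = L.m 0" using assms(26) by (simp add: L.m_def x_init)
  have Veq: "V = V_K A B C D K" by (rule meta_eq_to_obj_eq[OF assms(27)])
  have Seq: "S = (\<Sum>t. gam^t * L.m t)" using assms(28) by (simp add: L.m_def)
  have feq: "f = (Q + L.kR) * S + L.C0 / (1 - gam)"
    using assms(29) L.f_eq Seq by (simp add: L.hh_def)
  have Ser: "S * (1 - gam * V) = mu + L.cc * gam / (1 - gam)"
    using L.S_series(2) Seq mu Veq by simp
  have V0: "0 \<le> V" using L.V_nonneg Veq by simp
  have gV: "gam * V < 1" using stab Veq by simp
  have pos: "0 < 1 - gam * V" using gV by simp
  have g1: "0 < 1 - gam" using gam by simp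
  have cc0: "0 \<le> L.cc" by (rule L.cc_nonneg)
  have Sform: "S = (mu + L.cc * gam / (1 - gam)) / (1 - gam * V)"
    using Ser pos by (simp add: field_simps)
  have geo: "(\<Sum>t. (gam * V) ^ t) = 1 / (1 - gam * V)"
  proof (intro suminf_geometric)
    have "0 \<le> gam * V" using gam V0 by simp
    then show "norm (gam * V) < 1" using gV by simp
  qed
  have S0: "0 \<le> S"
    unfolding Seq using L.S_series(1) L.m_nonneg gam by (intro suminf_nonneg) auto
  show ?thesis
  proof (intro conjI impI)
    assume V1: "V \<noteq> 1"
    have d: "1 / (1 - gam) - 1 / (1 - gam * V) = gam * (1 - V) / ((1 - gam) * (1 - gam * V))"
      using g1 pos by (simp add: field_simps)
    show "S = mu * (\<Sum>t. (gam * V) ^ t)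
               + trace (Sig ** (outer B + transpose D ** D)) / (1 - V)
                 * (1 / (1 - gam) - 1 / (1 - gam * V))"
    proof -
      have v1: "1 - V \<noteq> 0" using V1 by simp
      have e1: "L.cc / (1 - V) * (gam * (1 - V) / ((1 - gam) * (1 - gam * V))) = L.cc * gam / ((1 - gam) * (1 - gam * V))"
      proof -
        have gen: "b \<noteq> 0 \<Longrightarrow> d \<noteq> 0 \<Longrightarrow> a / b * (c * b / d) = a * c / d" for a b c d :: real
          by (simp add: field_simps)
        have "((1 - gam) * (1 - gam * V)) \<noteq> 0" using g1 pos by simp
        from gen[OF v1 this] show ?thesis .
      qed
      have e2: "S = mu / (1 - gam * V) + L.cc * gam / ((1 - gam) * (1 - gam * V))"
        unfolding Sform by (simp add: add_divide_distrib divide_divide_eq_left mult.commute)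
      show ?thesis unfolding geo d L.cc_trace[symmetric] e1 e2 by simp
    qed
  next
    show "mu / (1 - gam * V) \<le> S"
      unfolding Sform using pos cc0 g1 gam by (intro divide_right_mono) auto
  next
    have "f - (1 / (1 - gam)) * (trace (Sig ** R) - tau / 2 * (real CARD('n) + ln ((2 * pi) ^ CARD('n) * det Sig)))
        = (Q + L.kR) * S" unfolding feq L.C0_def by simp
    moreover have "Q * S \<le> (Q + L.kR) * S" using L.kR_nonneg S0 by (intro mult_right_mono) auto
    ultimately show "S \<le> (f - (1 / (1 - gam)) * (trace (Sig ** R)
                 - tau / 2 * (real CARD('n) + ln ((2 * pi) ^ CARD('n) * det Sig)))) / Q"
      using Qpos by (simp add: field_simps)
  qed
qed

end
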